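(* Let $A\in\mathbb{R}^{n\times m}$ with $n<m$ have columns $\alpha_1,\dots,\alpha_m$ with $\|\alpha_i\|_2=1$ for all $i$, and let $\mu=\max_{i\neq j}|\langle\alpha_i,\alpha_j\rangle|$ be its coherence, assumed positive. Let $c_{ij}=\langle\alpha_i,\alpha_j\rangle$, $\nu(i)=\max_{j\neq i}\frac{|c_{ij}|}{c_{ii}}$, $\rho(i)=\frac{\nu(i)}{\nu(i)+1}$, and let $l^*$ be the largest integer $l\in\{0,\dots,m\}$ such that the sum of the $l$ largest values among $\rho(1),\dots,\rho(m)$ is $<\frac12$. Then for every integer $k$ with $k<\frac12(1+\mu^{-1})$ we have $\max_{\mathcal{S}\subseteq[m],|\mathcal{S}|=k}\sum_{i\in\mathcal{S}}\rho(i)<\frac12$, and hence $l^*\ge k$.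
   Context: $[m]=\{1,\dots,m\}$. $\langle\cdot,\cdot\rangle$ is the Euclidean inner product. *)

theory Defs
  imports "HOL-Analysis.Analysis"
begin

text \<open>The matrix A in R^(n x m) is given by its columns alpha 1, ..., alpha m,
  each a vector in R^n (type real^'n, n = CARD('n)).\<close>

definition cc :: "(nat \<Rightarrow> 'a::real_inner) \<Rightarrow> nat \<Rightarrow> nat \<Rightarrow> real" where
  "cc \<alpha> i j = \<alpha> i \<bullet> \<alpha> j"

definition coherence :: "nat \<Rightarrow> (nat \<Rightarrow> 'a::real_inner) \<Rightarrow> real" where
  "coherence m \<alpha> = Max {\<bar>cc \<alpha> i j\<bar> | i j. i \<in> {1..m} \<and> j \<in> {1..m} \<and> i \<noteq> j}"

definition nu :: "nat \<Rightarrow> (nat \<Rightarrow> 'a::real_inner) \<Rightarrow> nat \<Rightarrow> real" where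
  "nu m \<alpha> i = Max {\<bar>cc \<alpha> i j\<bar> / cc \<alpha> i i | j. j \<in> {1..m} \<and> j \<noteq> i}"

definition rho :: "nat \<Rightarrow> (nat \<Rightarrow> 'a::real_inner) \<Rightarrow> nat \<Rightarrow> real" where
  "rho m \<alpha> i = nu m \<alpha> i / (nu m \<alpha> i + 1)"

definition sum_largest :: "nat \<Rightarrow> real list \<Rightarrow> real" where
  "sum_largest l xs = sum_list (take l (rev (sort xs)))"

definition lstar :: "nat \<Rightarrow> (nat \<Rightarrow> 'a::real_inner) \<Rightarrow> nat" where
  "lstar m \<alpha> = (GREATEST l. l \<le> m \<and> sum_largest l (map (rho m \<alpha>) [1..<m+1]) < 1/2)"

end

theory Submission
  imports Defs
begin

lemma coh_lower:
  fixes \<alpha> :: "nat \<Rightarrow> real^'n" and m :: nat and \<mu> :: real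
  assumes "CARD('n) < m"
    and n1: "\<forall>i\<in>{1..m}. norm (\<alpha> i) = 1"
    and bd: "\<And>i j. i \<in> {1..m} \<Longrightarrow> j \<in> {1..m} \<Longrightarrow> i \<noteq> j \<Longrightarrow> \<bar>\<alpha> i \<bullet> \<alpha> j\<bar> \<le> \<mu>"
  shows "1 \<le> real (m - 1) * \<mu>"
proof (cases "inj_on \<alpha> {1..m}")
  case False
  then obtain i j where ij: "i \<in> {1..m}" "j \<in> {1..m}" "i \<noteq> j" "\<alpha> i = \<alpha> j"
    unfolding inj_on_def by blast
  have "\<alpha> i \<bullet> \<alpha> j = 1" using ij n1 by (metis norm_eq_1 inner_commute)
  then have "1 \<le> \<mu>" using bd[OF ij(1-3)] by simp
  moreover have "m \<ge> 2" using ij by auto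
  ultimately show ?thesis
    by (smt (verit, ccfv_SIG) Suc_1 diff_Suc_1 le_diff_conv2 mult_le_cancel_right1 of_nat_1 of_nat_le_iff one_le_numeral)
next
  case True
  let ?S = "\<alpha> ` {1..m}"
  have cS: "card ?S = m" using True by (simp add: card_image)
  have "dependent ?S"
    by (rule dependent_biggerset) (use cS assms(1) in auto)
  then obtain u where u: "\<exists>v\<in>?S. u v \<noteq> 0" "(\<Sum>v\<in>?S. u v *\<^sub>R v) = 0"
    using dependent_finite[of ?S] by auto
  define c where "c j = u (\<alpha> j)" for j
  have s0: "(\<Sum>j\<in>{1..m}. c j *\<^sub>R \<alpha> j) = 0"
    using u(2) sum.reindex[OF True, of "\<lambda>v. u v *\<^sub>R v"] unfolding c_def by (simp add: o_def)
  obtain j0 where j0: "j0 \<in> {1..m}" "c j0 \<noteq> 0" using u(1) c_def by auto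
  obtain i where i: "i \<in> {1..m}" "\<forall>j\<in>{1..m}. \<bar>c j\<bar> \<le> \<bar>c i\<bar>"
  proof -
    let ?M = "Max ((\<lambda>j. \<bar>c j\<bar>) ` {1..m})"
    have ne: "(\<lambda>j. \<bar>c j\<bar>) ` {1..m} \<noteq> {}" using j0 by auto
    have "?M \<in> (\<lambda>j. \<bar>c j\<bar>) ` {1..m}" using Max_in[OF _ ne] by simp
    then obtain i where "i \<in> {1..m}" "?M = \<bar>c i\<bar>" by auto
    moreover have "\<forall>j\<in>{1..m}. \<bar>c j\<bar> \<le> ?M" by simp
    ultimately show ?thesis using that by auto
  qed
  have ci: "\<bar>c i\<bar> > 0" using i j0 by fastforce
  have "0 = (\<Sum>j\<in>{1..m}. c j *\<^sub>R \<alpha> j) \<bullet> \<alpha> i" using s0 by simp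
  also have "\<dots> = (\<Sum>j\<in>{1..m}. c j * (\<alpha> j \<bullet> \<alpha> i))"
    by (simp add: inner_sum_left)
  also have "\<dots> = c i * (\<alpha> i \<bullet> \<alpha> i) + (\<Sum>j\<in>{1..m}-{i}. c j * (\<alpha> j \<bullet> \<alpha> i))"
    using i(1) by (simp add: sum.remove)
  also have "\<alpha> i \<bullet> \<alpha> i = 1" using n1 i(1) by (simp add: norm_eq_1[symmetric])
  finally have eq: "c i = - (\<Sum>j\<in>{1..m}-{i}. c j * (\<alpha> j \<bullet> \<alpha> i))" by simp
  have "\<bar>c i\<bar> \<le> (\<Sum>j\<in>{1..m}-{i}. \<bar>c j * (\<alpha> j \<bullet> \<alpha> i)\<bar>)"
    unfolding eq abs_minus_cancel by (rule sum_abs)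
  also have "\<dots> \<le> (\<Sum>j\<in>{1..m}-{i}. \<bar>c i\<bar> * \<mu>)"
  proof (rule sum_mono)
    fix j assume j: "j \<in> {1..m}-{i}"
    have "\<bar>\<alpha> j \<bullet> \<alpha> i\<bar> \<le> \<mu>" using bd[of j i] j i(1) by auto
    moreover have "\<bar>c j\<bar> \<le> \<bar>c i\<bar>" using i j by auto
    ultimately show "\<bar>c j * (\<alpha> j \<bullet> \<alpha> i)\<bar> \<le> \<bar>c i\<bar> * \<mu>"
      unfolding abs_mult by (simp add: mult_mono)
  qed
  also have "\<dots> = real (m - 1) * (\<bar>c i\<bar> * \<mu>)" using i(1) by simp
  finally have "\<bar>c i\<bar> * 1 \<le> \<bar>c i\<bar> * (real (m - 1) * \<mu>)" by (simp add: algebra_simps)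
  then show ?thesis using ci i(1) by (simp add: of_nat_diff)
qed

lemma sum_list_le_len:
  fixes xs :: "real list"
  assumes "\<forall>x\<in>set xs. x \<le> r"
  shows "sum_list xs \<le> real (length xs) * r"
  using assms by (induction xs) (auto simp: algebra_simps)

theorem mainTheorem4:
  fixes \<alpha> :: "nat \<Rightarrow> real^'n" and m k :: nat
  assumes "CARD('n) < m"
    and "\<forall>i\<in>{1..m}. norm (\<alpha> i) = 1"
    and "coherence m \<alpha> > 0"
    and "real k < (1 + 1 / coherence m \<alpha>) / 2"
  shows "Max {(\<Sum>i\<in>S. rho m \<alpha> i) | S. S \<subseteq> {1..m} \<and> card S = k} < 1/2
         \<and> k \<le> lstar m \<alpha>"
proof -
  define \<mu> where "\<mu> = coherence m \<alpha>"
  have mu0: "\<mu> > 0" using assms(3) \<mu>_def by simp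
  have m2: "m \<ge> 2" proof -
    have "CARD('n) > 0" by simp
    then show ?thesis using assms(1) by linarith
  qed
  define C where "C = {\<bar>cc \<alpha> i j\<bar> | i j. i \<in> {1..m} \<and> j \<in> {1..m} \<and> i \<noteq> j}"
  have finC: "finite C"
  proof -
    have "C \<subseteq> (\<lambda>(i,j). \<bar>cc \<alpha> i j\<bar>) ` ({1..m}\<times>{1..m})" unfolding C_def by auto
    then show ?thesis by (rule finite_subset) auto
  qed
  have bd: "\<bar>\<alpha> i \<bullet> \<alpha> j\<bar> \<le> \<mu>" if "i \<in> {1..m}" "j \<in> {1..m}" "i \<noteq> j" for i j
  proof -
    have "\<bar>cc \<alpha> i j\<bar> \<in> C" unfolding C_def using that by blast
    then have "\<bar>cc \<alpha> i j\<bar> \<le> Max C" using finC by simp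
    then show ?thesis unfolding \<mu>_def coherence_def C_def[symmetric] by (simp add: cc_def)
  qed
  have low: "1 \<le> real (m - 1) * \<mu>"
    by (rule coh_lower[OF assms(1) assms(2)]) (use bd in auto)
  have inv: "1 / \<mu> \<le> real (m - 1)" using low mu0 m2 by (simp add: divide_le_eq mult.commute of_nat_diff)
  have km: "k \<le> m"
  proof -
    have "(1 + 1 / \<mu>) / 2 \<le> (1 + real (m - 1)) / 2" using inv by (intro divide_right_mono) auto
    then have "real k < (1 + real (m - 1)) / 2" using assms(4) unfolding \<mu>_def by linarith
    then have "real k < real m" using m2 by (simp add: of_nat_diff)
    then show ?thesis by simp
  qed
  define r where "r = \<mu> / (\<mu> + 1)"
  have r0: "r \<ge> 0" using mu0 r_def by simp
  have kr: "real k * r < 1/2"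
  proof -
    have e: "(1 + 1 / \<mu>) / 2 = (\<mu> + 1) / (2 * \<mu>)" using mu0 by (simp add: field_simps)
    have "real k < (\<mu> + 1) / (2 * \<mu>)" using assms(4) unfolding \<mu>_def[symmetric] e .
    then have a: "real k * (2 * \<mu>) < \<mu> + 1" using mu0 by (simp add: pos_less_divide_eq)
    have b: "real k * (2 * \<mu>) = 2 * (real k * \<mu>)" by simp
    have c: "real k * r = (real k * \<mu>) / (\<mu> + 1)" by (simp add: r_def)
    have "(real k * \<mu>) / (\<mu> + 1) < 1/2"
      using mu0 a b by (simp add: divide_less_eq)
    then show ?thesis using c by simp
  qed
  have rho_le: "rho m \<alpha> i \<le> r" if i: "i \<in> {1..m}" for i
  proof -
    define N where "N = {\<bar>cc \<alpha> i j\<bar> / cc \<alpha> i i | j. j \<in> {1..m} \<and> j \<noteq> i}"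
    have cii: "cc \<alpha> i i = 1" using assms(2) i unfolding cc_def by (simp add: norm_eq_1[symmetric])
    have finN: "finite N"
    proof -
      have "N \<subseteq> (\<lambda>j. \<bar>cc \<alpha> i j\<bar> / cc \<alpha> i i) ` {1..m}" unfolding N_def by auto
      then show ?thesis by (rule finite_subset) auto
    qed
    obtain j where j: "j \<in> {1..m}" "j \<noteq> i"
    proof (cases "i = 1")
      case True then show ?thesis using that[of 2] m2 by auto
    next
      case False then show ?thesis using that[of 1] m2 by auto
    qed
    have jN: "\<bar>cc \<alpha> i j\<bar> / cc \<alpha> i i \<in> N" unfolding N_def using j by blast
    have neN: "N \<noteq> {}" using jN by auto
    have nu_def': "nu m \<alpha> i = Max N" unfolding nu_def N_def ..
    have nu0: "0 \<le> nu m \<alpha> i"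
    proof -
      have "\<bar>cc \<alpha> i j\<bar> / cc \<alpha> i i \<le> Max N" using jN finN by simp
      then show ?thesis using cii nu_def' by simp
    qed
    have allN: "\<forall>x\<in>N. x \<le> \<mu>"
    proof
      fix x assume "x \<in> N"
      then obtain j' where "j' \<in> {1..m}" "j' \<noteq> i" "x = \<bar>cc \<alpha> i j'\<bar> / cc \<alpha> i i"
        unfolding N_def by blast
      then show "x \<le> \<mu>" using bd[of i j'] i cii unfolding cc_def by auto
    qed
    have nuM: "nu m \<alpha> i \<le> \<mu>"
      unfolding nu_def' using finN neN allN by simp
    have "nu m \<alpha> i / (nu m \<alpha> i + 1) \<le> \<mu> / (\<mu> + 1)"
    proof -
      have "nu m \<alpha> i * (\<mu> + 1) \<le> \<mu> * (nu m \<alpha> i + 1)" using nuM by (simp add: algebra_simps)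
      have p1: "nu m \<alpha> i + 1 > 0" "\<mu> + 1 > 0" using nu0 mu0 by auto
      show ?thesis using p1 \<open>nu m \<alpha> i * (\<mu> + 1) \<le> \<mu> * (nu m \<alpha> i + 1)\<close>
        by (simp add: divide_le_eq le_divide_eq mult.commute)
    qed
    then show ?thesis unfolding rho_def r_def .
  qed
  define F where "F = {(\<Sum>i\<in>S. rho m \<alpha> i) | S. S \<subseteq> {1..m} \<and> card S = k}"
  have finF: "finite F"
  proof -
    have "F \<subseteq> (\<lambda>S. \<Sum>i\<in>S. rho m \<alpha> i) ` Pow {1..m}" unfolding F_def by auto
    then show ?thesis by (rule finite_subset) auto
  qed
  have neF: "F \<noteq> {}"
  proof -
    have "{1..k} \<subseteq> {1..m}" "card {1..k} = k" using km by auto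
    then have "(\<Sum>i\<in>{1..k}. rho m \<alpha> i) \<in> F" unfolding F_def by (intro CollectI exI[of _ "{1..k}"]) simp
    then show ?thesis by auto
  qed
  have allF: "x < 1/2" if "x \<in> F" for x
  proof -
    have "\<exists>S. x = (\<Sum>i\<in>S. rho m \<alpha> i) \<and> S \<subseteq> {1..m} \<and> card S = k"
      using that unfolding F_def mem_Collect_eq .
    then obtain S where S: "S \<subseteq> {1..m}" "card S = k" "x = (\<Sum>i\<in>S. rho m \<alpha> i)"
      by blast
    have "x \<le> (\<Sum>i\<in>S. r)" unfolding S(3) by (rule sum_mono) (use S(1) rho_le in auto)
    also have "\<dots> = real k * r" using S(2) by simp
    finally show ?thesis using kr by simp
  qed
  have part1: "Max F < 1/2" using Max_in[OF finF neF] by (rule allF)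
  let ?P = "\<lambda>l. l \<le> m \<and> sum_largest l (map (rho m \<alpha>) [1..<m+1]) < 1/2"
  have Pk: "?P k"
  proof -
    let ?xs = "take k (rev (sort (map (rho m \<alpha>) [1..<m+1])))"
    have "\<forall>x\<in>set ?xs. x \<le> r"
    proof
      fix x assume "x \<in> set ?xs"
      then have "x \<in> set (rev (sort (map (rho m \<alpha>) [1..<m+1])))" by (rule in_set_takeD)
      then have "x \<in> set (map (rho m \<alpha>) [1..<m+1])" by simp
      then show "x \<le> r" using rho_le by auto
    qed
    then have "sum_list ?xs \<le> real (length ?xs) * r" by (rule sum_list_le_len)
    also have "\<dots> \<le> real k * r" using r0 by (intro mult_right_mono) auto
    finally have "sum_list ?xs \<le> real k * r" .
    then show ?thesis using kr km unfolding sum_largest_def by linarith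
  qed
  have "k \<le> lstar m \<alpha>" unfolding lstar_def
    by (rule Greatest_le_nat[of ?P k m]) (use Pk in auto)
  then show ?thesis using part1 unfolding F_def by simp
qed

end
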